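(* With the notation of the context, for every sufficiently small $\varepsilon>0$ the following holds. For each $i\ge0$ there exists an open $C^\infty$ curve $\gamma_i$ properly embedded in the strip $[2i,2i+1]\times\mathbb R$ such that: (1) the $y$-component of the unit tangent vector of $\gamma_i$ is nonzero at every point and bounded below by a positive constant along the whole curve; (2) $\gamma_i$ contains all the points $p^i_l=(\Delta^l(c_i)+2i,\,l)$, $l\ge0$; (3) the curvature $\kappa_i$ of $\gamma_i$ satisfies $|\kappa_i(p)|<15$ for all $p\in\gamma_i$; (4) for all $l\ge0$, $\gamma_i$ coincides near $p^i_l$ with the vertical segment $\{(\Delta^l(c_i)+2i,y):y\in(l-\varepsilon,l+\varepsilon)\}$. In particular $\gamma_i$ has infinite length.
   Context: A Turing machine with alphabet $\{0,\dots,9\}$ ($0$ blank) and states $Q=\{1,\dots,m\}$ is fixed. Tapes have finitely many nonzero symbols, written $\dots00t_{-a}\dots t_b00\dots$; $s$ is the integer with decimal digits $t_{-a}\dots t_{-1}$ and $r$ the integer with decimal digits $t_b\dots t_0$; configurations $(q,t)$ are encoded as $\varphi(q,t)=\frac{1}{2^q3^r5^s}\in[0,1]$. $\Delta$ is the global one-step transition function on configurations, extended by $\Delta(q_{halt},t)=(q_{halt},t)$. The initial configurations (state $q_0$) are identified with their encodings and listed as $c_0>c_1>\cdots$; $\Delta^l(c_i)\in[0,1]$ denotes the encoding of the configuration after $l$ steps starting from $c_i$. *)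

theory Defs
  imports "HOL-Analysis.Analysis"
begin

text \<open>A tape is a function int => nat; position 0 is the head position.
  A configuration is a pair (state, tape).\<close>

type_synonym tape = "int \<Rightarrow> nat"
type_synonym config = "nat \<times> tape"

definition valid_tape :: "tape \<Rightarrow> bool" where
  "valid_tape t \<longleftrightarrow> finite {k. t k \<noteq> 0} \<and> (\<forall>k. t k \<le> 9)"

definition tape_r :: "tape \<Rightarrow> nat" where
  "tape_r t = (\<Sum>k\<in>{k::nat. t (int k) \<noteq> 0}. t (int k) * 10 ^ k)"

definition tape_s :: "tape \<Rightarrow> nat" where
  "tape_s t = (\<Sum>k\<in>{k::nat. t (- int k - 1) \<noteq> 0}. t (- int k - 1) * 10 ^ k)"

definition enc :: "config \<Rightarrow> real" where
  "enc c = 1 / (2 ^ fst c * 3 ^ tape_r (snd c) * 5 ^ tape_s (snd c))"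

text \<open>Transition function: delta q a = (q', a', e) with new state q', written
  symbol a' and head move e in {-1,0,1}.\<close>

definition tm_wf :: "nat \<Rightarrow> (nat \<Rightarrow> nat \<Rightarrow> nat \<times> nat \<times> int) \<Rightarrow> nat \<Rightarrow> nat \<Rightarrow> bool" where
  "tm_wf m \<delta> q0 qh \<longleftrightarrow> q0 \<in> {1..m} \<and> qh \<in> {1..m} \<and>
     (\<forall>q\<in>{1..m}. \<forall>a\<le>9. fst (\<delta> q a) \<in> {1..m} \<and> fst (snd (\<delta> q a)) \<le> 9 \<and>
        snd (snd (\<delta> q a)) \<in> {-1, 0, 1})"

definition tm_step :: "(nat \<Rightarrow> nat \<Rightarrow> nat \<times> nat \<times> int) \<Rightarrow> nat \<Rightarrow> config \<Rightarrow> config" where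
  "tm_step \<delta> qh c =
     (if fst c = qh then c
      else (let (q', a', e) = \<delta> (fst c) (snd c 0);
                t' = (snd c)(0 := a')
            in (q', \<lambda>k. t' (k + e))))"

text \<open>Encodings of initial configurations, listed decreasingly as c_0 > c_1 > ...\<close>

definition init_encs :: "nat \<Rightarrow> real set" where
  "init_encs q0 = {enc (q0, t) | t. valid_tape t}"

definition init_c :: "nat \<Rightarrow> nat \<Rightarrow> real" where
  "init_c q0 i = (THE x. x \<in> init_encs q0 \<and> card {y \<in> init_encs q0. x < y} = i)"

definition init_conf :: "nat \<Rightarrow> nat \<Rightarrow> config" where
  "init_conf q0 i = (q0, THE t. valid_tape t \<and> enc (q0, t) = init_c q0 i)"

definition orbit_enc :: "(nat \<Rightarrow> nat \<Rightarrow> nat \<times> nat \<times> int) \<Rightarrow> nat \<Rightarrow> nat \<Rightarrow> nat \<Rightarrow> nat \<Rightarrow> real" where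
  "orbit_enc \<delta> qh q0 i l = enc ((tm_step \<delta> qh ^^ l) (init_conf q0 i))"

definition smooth_fun :: "(real \<Rightarrow> real) \<Rightarrow> bool" where
  "smooth_fun f \<longleftrightarrow> (\<forall>n x. ((deriv ^^ n) f) differentiable (at x))"

definition cx :: "(real \<Rightarrow> real \<times> real) \<Rightarrow> real \<Rightarrow> real" where
  "cx \<gamma> t = fst (\<gamma> t)"

definition cy :: "(real \<Rightarrow> real \<times> real) \<Rightarrow> real \<Rightarrow> real" where
  "cy \<gamma> t = snd (\<gamma> t)"

definition proper_embedded_curve :: "(real \<Rightarrow> real \<times> real) \<Rightarrow> (real \<times> real) set \<Rightarrow> bool" where
  "proper_embedded_curve \<gamma> S \<longleftrightarrow>
     smooth_fun (cx \<gamma>) \<and> smooth_fun (cy \<gamma>) \<and>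
     (\<forall>t. (deriv (cx \<gamma>) t, deriv (cy \<gamma>) t) \<noteq> (0, 0)) \<and>
     inj \<gamma> \<and> (\<exists>g. homeomorphism UNIV (range \<gamma>) \<gamma> g) \<and>
     range \<gamma> \<subseteq> S \<and>
     (\<forall>K. compact K \<longrightarrow> compact (\<gamma> -` K))"

definition unit_tangent_y :: "(real \<Rightarrow> real \<times> real) \<Rightarrow> real \<Rightarrow> real" where
  "unit_tangent_y \<gamma> t =
     deriv (cy \<gamma>) t / sqrt ((deriv (cx \<gamma>) t)\<^sup>2 + (deriv (cy \<gamma>) t)\<^sup>2)"

definition curvature :: "(real \<Rightarrow> real \<times> real) \<Rightarrow> real \<Rightarrow> real" where
  "curvature \<gamma> t =
     (deriv (cx \<gamma>) t * deriv (deriv (cy \<gamma>)) t - deriv (cy \<gamma>) t * deriv (deriv (cx \<gamma>)) t)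
     / ((deriv (cx \<gamma>) t)\<^sup>2 + (deriv (cy \<gamma>) t)\<^sup>2) powr (3/2)"

end

theory Submission
  imports Defs "HOL-Computational_Algebra.Polynomial"
begin


definition Cn :: "nat \<Rightarrow> (real \<Rightarrow> real) \<Rightarrow> bool" where
  "Cn n f \<longleftrightarrow> (\<forall>j\<le>n. \<forall>x. (deriv ^^ j) f differentiable at x)"

lemma deriv_eqI: "(\<And>x. DERIV f x :> f' x) \<Longrightarrow> deriv f = f'"
  by (rule ext) (rule DERIV_imp_deriv)

lemma Cn_0: "Cn 0 f \<longleftrightarrow> (\<forall>x. f differentiable at x)"
  by (simp add: Cn_def)

lemma Cn_Suc: "Cn (Suc n) f \<longleftrightarrow> (\<forall>x. f differentiable at x) \<and> Cn n (deriv f)"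
proof -
  have "(\<forall>j\<le>Suc n. P j) \<longleftrightarrow> P 0 \<and> (\<forall>j\<le>n. P (Suc j))" for P
    by (metis Suc_le_mono le0 not0_implies_Suc)
  then show ?thesis
    unfolding Cn_def by (simp add: funpow_Suc_right del: funpow.simps)
qed

lemma Cn_diff: "Cn n f \<Longrightarrow> \<forall>x. f differentiable at x"
  by (cases n) (auto simp: Cn_0 Cn_Suc)

lemma Cn_mono: "Cn (Suc n) f \<Longrightarrow> Cn n f"
  by (simp add: Cn_def)

lemma DERIV_d: fixes f :: "real \<Rightarrow> real" shows "f differentiable at x \<Longrightarrow> DERIV f x :> deriv f x"
  using DERIV_deriv_iff_real_differentiable by blast

lemma smooth_Cn: "smooth_fun f \<longleftrightarrow> (\<forall>n. Cn n f)"
  unfolding smooth_fun_def Cn_def by auto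

lemma Cn_add: "Cn n f \<Longrightarrow> Cn n g \<Longrightarrow> Cn n (\<lambda>x. f x + g x)"
proof (induction n arbitrary: f g)
  case 0 then show ?case by (auto simp: Cn_0)
next
  case (Suc n)
  have df: "\<forall>x. f differentiable at x" and dg: "\<forall>x. g differentiable at x"
    using Suc.prems by (auto simp: Cn_Suc)
  have "deriv (\<lambda>x. f x + g x) = (\<lambda>x. deriv f x + deriv g x)"
    by (rule deriv_eqI) (intro derivative_intros DERIV_d df[rule_format] dg[rule_format])
  then show ?case using Suc df dg by (auto simp: Cn_Suc)
qed

lemma Cn_const: "Cn n (\<lambda>x. c)"
proof (induction n arbitrary: c)
  case 0 then show ?case by (simp add: Cn_0)
next
  case (Suc n)
  have "deriv (\<lambda>x. c) = (\<lambda>x. 0)" by (rule deriv_eqI) simp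
  then show ?case using Suc by (simp add: Cn_Suc)
qed

lemma Cn_mult: "Cn n f \<Longrightarrow> Cn n g \<Longrightarrow> Cn n (\<lambda>x. f x * g x)"
proof (induction n arbitrary: f g)
  case 0 then show ?case by (auto simp: Cn_0)
next
  case (Suc n)
  have df: "\<forall>x. f differentiable at x" and dg: "\<forall>x. g differentiable at x"
    using Suc.prems by (auto simp: Cn_Suc)
  have "deriv (\<lambda>x. f x * g x) = (\<lambda>x. deriv f x * g x + f x * deriv g x)"
  proof (rule deriv_eqI)
    fix x
    from DERIV_mult[OF DERIV_d[OF df[rule_format, of x]] DERIV_d[OF dg[rule_format, of x]]]
    show "DERIV (\<lambda>x. f x * g x) x :> deriv f x * g x + f x * deriv g x"
      by (simp add: algebra_simps)
  qed
  moreover have "Cn n f" "Cn n g" "Cn n (deriv f)" "Cn n (deriv g)"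
    using Suc.prems by (auto simp: Cn_Suc intro: Cn_mono)
  ultimately show ?case using Suc df dg by (auto simp: Cn_Suc intro!: Cn_add)
qed

lemma Cn_id: "Cn n (\<lambda>x. x)"
proof (cases n)
  case 0 then show ?thesis by (simp add: Cn_0)
next
  case (Suc m)
  have "deriv (\<lambda>x::real. x) = (\<lambda>x. 1)" by (rule deriv_eqI) simp
  then show ?thesis using Suc by (simp add: Cn_Suc Cn_const)
qed

lemma Cn_affine: "Cn n f \<Longrightarrow> Cn n (\<lambda>x. f (a * x + b))"
proof (induction n arbitrary: f)
  case 0
  have df: "\<forall>x. f differentiable at x" using 0 by (auto simp: Cn_0)
  have "DERIV (\<lambda>x. f (a * x + b)) x :> deriv f (a * x + b) * a" for x
  proof -
    have "DERIV (\<lambda>x. a * x + b) x :> a" by (auto intro!: derivative_eq_intros)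
    from DERIV_chain2[OF DERIV_d[OF df[rule_format]] this] show ?thesis .
  qed
  then show ?case unfolding Cn_0 real_differentiable_def by blast
next
  case (Suc n)
  have df: "\<forall>x. f differentiable at x" using Suc.prems by (auto simp: Cn_Suc)
  have D: "DERIV (\<lambda>x. f (a * x + b)) x :> a * deriv f (a * x + b)" for x
  proof -
    have "DERIV (\<lambda>x. a * x + b) x :> a" by (auto intro!: derivative_eq_intros)
    from DERIV_chain2[OF DERIV_d[OF df[rule_format]] this] show ?thesis by (simp add: mult.commute)
  qed
  then have "deriv (\<lambda>x. f (a * x + b)) = (\<lambda>x. a * deriv f (a * x + b))"
    by (rule deriv_eqI)
  moreover have "Cn n (\<lambda>x. deriv f (a * x + b))" using Suc by (simp add: Cn_Suc)
  ultimately show ?case using D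
    by (auto simp: Cn_Suc real_differentiable_def intro!: Cn_mult Cn_const)
qed

lemma DERIV_cinvk:
  assumes dc: "DERIV c x :> c'" and dg: "DERIV g x :> g'" and nz: "g x \<noteq> 0"
  shows "DERIV (\<lambda>x. c x * inverse (g x) ^ k) x :>
      c' * inverse (g x) ^ k + (- real k * c x * g') * inverse (g x) ^ (k+1)"
proof -
  have D0: "DERIV (\<lambda>x. c x * inverse (g x) ^ k) x :>
    c' * inverse (g x) ^ k + of_nat k * (- (g' * inverse (g x ^ Suc (Suc 0))) * inverse (g x) ^ (k - Suc 0)) * c x"
    using DERIV_mult[OF dc DERIV_power[OF DERIV_inverse_fun[OF dg nz]]] .
  have eq: "of_nat k * (- (g' * inverse (g x ^ Suc (Suc 0))) * inverse (g x) ^ (k - Suc 0)) * c x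
      = (- real k * c x * g') * inverse (g x) ^ (k+1)"
  proof (cases k)
    case 0 then show ?thesis by simp
  next
    case (Suc m)
    have e: "inverse (g x) ^ (k + 1) = inverse (g x ^ Suc (Suc 0)) * inverse (g x) ^ m"
      unfolding Suc by (simp add: power_inverse[symmetric] mult_ac)
    show ?thesis unfolding e using Suc by (simp add: algebra_simps)
  qed
  from D0 show ?thesis unfolding eq .
qed

lemma Cn_inverse_aux:
  assumes g: "\<forall>n. Cn n g" and nz: "\<And>x. g x \<noteq> 0"
  shows "Cn n c \<Longrightarrow> Cn n (\<lambda>x. c x * inverse (g x) ^ k)"
proof (induction n arbitrary: c k)
  case 0
  have dc: "\<forall>x. c differentiable at x" using 0 by (auto simp: Cn_0)
  have dg: "\<forall>x. g differentiable at x" using g Cn_diff by blast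
  show ?case unfolding Cn_0 real_differentiable_def
    using DERIV_cinvk[OF DERIV_d[OF dc[rule_format]] DERIV_d[OF dg[rule_format]] nz] by blast
next
  case (Suc n)
  have dc: "\<forall>x. c differentiable at x" using Suc.prems by (auto simp: Cn_Suc)
  have dg: "\<forall>x. g differentiable at x" using g Cn_diff by blast
  have D: "DERIV (\<lambda>x. c x * inverse (g x) ^ k) x :>
      deriv c x * inverse (g x) ^ k + (- real k * c x * deriv g x) * inverse (g x) ^ (k+1)" for x
    by (rule DERIV_cinvk[OF DERIV_d[OF dc[rule_format]] DERIV_d[OF dg[rule_format]] nz])
  then have de: "deriv (\<lambda>x. c x * inverse (g x) ^ k) = (\<lambda>x. deriv c x * inverse (g x) ^ k + (- real k * c x * deriv g x) * inverse (g x) ^ (k+1))"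
    by (rule deriv_eqI)
  have h1: "Cn n (deriv c)" "Cn n c" using Suc.prems by (auto simp: Cn_Suc intro: Cn_mono)
  have h2: "Cn n (deriv g)" using g Cn_Suc by blast
  have dd: "\<forall>x. (\<lambda>x. c x * inverse (g x) ^ k) differentiable at x"
    using D unfolding real_differentiable_def by blast
  have c1: "Cn n (\<lambda>x. deriv c x * inverse (g x) ^ k)"
    by (rule Suc.IH[OF h1(1)])
  have c2: "Cn n (\<lambda>x. (- real k * c x * deriv g x) * inverse (g x) ^ (k+1))"
    by (rule Suc.IH) (intro Cn_mult Cn_const h1(2) h2)
  have "Cn n (deriv (\<lambda>x. c x * inverse (g x) ^ k))"
    unfolding de by (rule Cn_add[OF c1 c2])
  then show ?case using dd by (simp add: Cn_Suc)
qed

lemma smooth_inverse: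
  assumes "smooth_fun g" "\<And>x. g x \<noteq> 0"
  shows "smooth_fun (\<lambda>x. inverse (g x))"
  using Cn_inverse_aux[of g, OF _ assms(2), of _ "\<lambda>_. 1" 1] assms(1)
  by (simp add: smooth_Cn Cn_const)



lemma lim_poly_exp: "((\<lambda>u. poly r u * exp (- u)) \<longlongrightarrow> (0::real)) at_top"
proof -
  have "((\<lambda>u. \<Sum>i\<le>degree r. coeff r i * (u ^ i / exp u)) \<longlongrightarrow> (\<Sum>i\<le>degree r. coeff r i * 0)) at_top"
    by (intro tendsto_sum tendsto_mult tendsto_const tendsto_power_div_exp_0)
  moreover have "(\<lambda>u. \<Sum>i\<le>degree r. coeff r i * (u ^ i / exp u)) = (\<lambda>u. poly r u * exp (- u))"
    by (auto simp: poly_altdef sum_divide_distrib exp_minus field_simps)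
  ultimately show ?thesis by simp
qed

lemma lim_poly_exp_inv: "((\<lambda>y. poly r (inverse y) * exp (- inverse y)) \<longlongrightarrow> (0::real)) (at_right 0)"
  using filterlim_compose[OF lim_poly_exp filterlim_inverse_at_top_right] by (simp add: o_def)

definition G :: "real poly \<Rightarrow> real \<Rightarrow> real" where
  "G p x = (if x \<le> 0 then 0 else poly p (inverse x) * exp (- inverse x))"

definition qG :: "real poly \<Rightarrow> real poly" where
  "qG p = [:0,0,1:] * (p - pderiv p)"

lemma G_DERIV: "DERIV (G p) x :> G (qG p) x"
proof (cases "x > 0")
  case True
  have "DERIV (\<lambda>x. poly p (inverse x) * exp (- inverse x)) x :>
     poly (pderiv p) (inverse x) * (- (inverse x * inverse x)) * exp (- inverse x)
     + poly p (inverse x) * (exp (- inverse x) * (inverse x * inverse x))"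
    using True
    by (auto intro!: derivative_eq_intros DERIV_chain2[OF poly_DERIV] simp: power2_eq_square)
  moreover have "poly (pderiv p) (inverse x) * (- (inverse x * inverse x)) * exp (- inverse x)
     + poly p (inverse x) * (exp (- inverse x) * (inverse x * inverse x)) = G (qG p) x"
    using True by (simp add: G_def qG_def algebra_simps)
  ultimately have "DERIV (\<lambda>x. poly p (inverse x) * exp (- inverse x)) x :> G (qG p) x" by simp
  then show ?thesis
    by (rule has_field_derivative_transform_within_open[where S="{0<..}"]) (use True in \<open>auto simp: G_def\<close>)
next
  case False
  show ?thesis
  proof (cases "x < 0")
    case True
    have "DERIV (\<lambda>x. 0) x :> G (qG p) x" using True by (simp add: G_def)
    then show ?thesis
      by (rule has_field_derivative_transform_within_open[where S="{..<0}"]) (use True in \<open>auto simp: G_def\<close>)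
  next
    case False
    with \<open>\<not> x > 0\<close> have x0: "x = 0" by simp
    have "((\<lambda>y. (G p y - G p 0) / (y - 0)) \<longlongrightarrow> 0) (at 0)"
    proof (rule filterlim_split_at)
      show "((\<lambda>y. (G p y - G p 0) / (y - 0)) \<longlongrightarrow> 0) (at_left 0)"
        by (rule tendsto_eventually) (auto simp: G_def eventually_at_left_field intro: exI[of _ "-1"])
      have L: "((\<lambda>y. poly ([:0,1:] * p) (inverse y) * exp (- inverse y)) \<longlongrightarrow> 0) (at_right 0)"
        by (rule lim_poly_exp_inv)
      have E: "poly ([:0,1:] * p) (inverse y) * exp (- inverse y) = (G p y - G p 0) / (y - 0)"
        if "0 < y" for y
      proof -
        have "G p y = poly p (inverse y) * exp (- inverse y)" "G p 0 = 0"
          using that by (simp_all add: G_def)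
        then show ?thesis by (simp add: divide_inverse algebra_simps)
      qed
      have "eventually (\<lambda>y. poly ([:0,1:] * p) (inverse y) * exp (- inverse y) = (G p y - G p 0) / (y - 0)) (at_right 0)"
        unfolding eventually_at_right_field using E by (intro exI[of _ 1]) simp
      from Lim_transform_eventually[OF L this]
      show "((\<lambda>y. (G p y - G p 0) / (y - 0)) \<longlongrightarrow> 0) (at_right 0)" .
    qed
    then show ?thesis using x0 by (simp add: has_field_derivative_iff G_def)
  qed
qed

lemma Cn_G: "Cn n (G p)"
proof (induction n arbitrary: p)
  case 0 then show ?case using G_DERIV by (auto simp: Cn_0 real_differentiable_def)
next
  case (Suc n)
  have "deriv (G p) = G (qG p)" by (rule deriv_eqI) (rule G_DERIV)
  then show ?case using Suc G_DERIV by (auto simp: Cn_Suc real_differentiable_def)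
qed

definition hh :: "real \<Rightarrow> real" where "hh x = G 1 x"

lemma hh_smooth: "smooth_fun hh"
proof -
  have "hh = G 1" by (rule ext) (simp add: hh_def)
  then show ?thesis unfolding smooth_Cn using Cn_G by metis
qed

lemma hh_pos: "x > 0 \<Longrightarrow> hh x > 0" and hh_zero: "x \<le> 0 \<Longrightarrow> hh x = 0" and hh_nonneg: "hh x \<ge> 0"
  by (auto simp: hh_def G_def)



definition Pp :: "real \<Rightarrow> real" where "Pp z = 6*z^5 - 15*z^4 + 10*z^3"
definition Pp1 :: "real \<Rightarrow> real" where "Pp1 z = 30*z^4 - 60*z^3 + 30*z^2"
definition Pp2 :: "real \<Rightarrow> real" where "Pp2 z = 120*z^3 - 180*z^2 + 60*z"

lemma Pp_D: "DERIV Pp z :> Pp1 z"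
  unfolding Pp_def[abs_def] Pp1_def by (auto intro!: derivative_eq_intros simp: algebra_simps)
lemma Pp1_D: "DERIV Pp1 z :> Pp2 z"
  unfolding Pp1_def[abs_def] Pp2_def by (auto intro!: derivative_eq_intros simp: algebra_simps)

lemma Pp_sym: "Pp (1 - z) = 1 - Pp z"
  unfolding Pp_def by algebra

lemma cubic_aux: fixes v :: real assumes "0 \<le> v" "v \<le> 1" shows "v * (1 - v^2) \<le> 1/2"
proof -
  have "2 - 4 * (v * (1 - v^2)) = (2 * v - 1)^2 * (v + 1) + (1 - v)"
    by algebra
  moreover have "0 \<le> (2 * v - 1)^2 * (v + 1) + (1 - v)" using assms by simp
  ultimately show ?thesis by linarith
qed
  
lemma Pp_bounds:
  assumes "0 \<le> z" "z \<le> 1"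
  shows "0 \<le> Pp z" "Pp z \<le> 10 * z^3" "0 \<le> Pp1 z" "Pp1 z \<le> 30 * z^2"
    "\<bar>Pp2 z\<bar> \<le> 60 * z" "\<bar>Pp2 z\<bar> \<le> 15/2"
proof -
  have z3: "0 \<le> z^3" using assms by simp
  have a: "Pp z = z^3 * (6*(z - 5/4)^2 + 5/8)"
    unfolding Pp_def by algebra
  then show "0 \<le> Pp z" using z3 by simp
  have "10*z^3 - Pp z = z^4 * (15 - 6*z)" unfolding Pp_def by algebra
  moreover have "0 \<le> z^4 * (15 - 6*z)" using assms by simp
  ultimately show "Pp z \<le> 10 * z^3" by linarith
  have "Pp1 z = 30 * z^2 * (z - 1)^2" unfolding Pp1_def by algebra
  then show "0 \<le> Pp1 z" by simp
  have "30*z^2 - Pp1 z = 30 * z^3 * (2 - z)" unfolding Pp1_def by algebra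
  moreover have "0 \<le> 30 * z^3 * (2 - z)" using assms by simp
  ultimately show "Pp1 z \<le> 30 * z^2" by linarith
  have e: "Pp2 z = 60 * z * (2*z^2 - 3*z + 1)" unfolding Pp2_def by algebra
  have "z * z \<le> z * 1" using assms by (intro mult_left_mono) auto
  then have le1: "2*z^2 - 3*z + 1 \<le> 1" using assms by (simp add: power2_eq_square)
  have "2*z^2 - 3*z + 1 = 2*(z - 3/4)^2 - 1/8" by algebra
  moreover have "0 \<le> (z - 3/4)^2" by simp
  ultimately have "-1 \<le> 2*z^2 - 3*z + 1" by linarith
  with le1 have "\<bar>2*z^2 - 3*z + 1\<bar> \<le> 1" by simp
  moreover have "\<bar>Pp2 z\<bar> = 60 * z * \<bar>2*z^2 - 3*z + 1\<bar>" using assms by (simp add: e abs_mult)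
  ultimately have "\<bar>Pp2 z\<bar> \<le> 60 * z * 1" using assms by (metis mult_left_mono mult_nonneg_nonneg zero_le_numeral)
  then show "\<bar>Pp2 z\<bar> \<le> 60 * z" by simp
  define u where "u = 1 - 2*z"
  have pu: "Pp2 z = 15 * (u * (1 - u^2))" unfolding Pp2_def u_def by algebra
  have u1: "\<bar>u\<bar> \<le> 1" using assms unfolding u_def by simp
  then have "\<bar>u\<bar> * (1 - \<bar>u\<bar>^2) \<le> 1/2" by (intro cubic_aux) auto
  moreover have u2: "u^2 \<le> 1" using u1 by (simp add: abs_square_le_1)
  have "\<bar>1 - u^2\<bar> = 1 - u^2" using u2 by simp
  then have "\<bar>u * (1 - u^2)\<bar> = \<bar>u\<bar> * (1 - \<bar>u\<bar>^2)"
    by (simp add: abs_mult)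
  ultimately have "\<bar>u * (1 - u^2)\<bar> \<le> 1/2" by simp
  then show "\<bar>Pp2 z\<bar> \<le> 15/2" unfolding pu abs_mult by simp
qed

lemma Pp_le1: "0 \<le> z \<Longrightarrow> z \<le> 1 \<Longrightarrow> Pp z \<le> 1"
  using Pp_bounds(1)[of "1 - z"] Pp_sym[of z] by simp

lemma sm_add: "smooth_fun f \<Longrightarrow> smooth_fun g \<Longrightarrow> smooth_fun (\<lambda>x. f x + g x)"
  by (simp add: smooth_Cn Cn_add)
lemma sm_mult: "smooth_fun f \<Longrightarrow> smooth_fun g \<Longrightarrow> smooth_fun (\<lambda>x. f x * g x)"
  by (simp add: smooth_Cn Cn_mult)
lemma sm_const: "smooth_fun (\<lambda>x. c)"
  by (simp add: smooth_Cn Cn_const)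
lemma sm_id: "smooth_fun (\<lambda>x. x)"
  by (simp add: smooth_Cn Cn_id)
lemma sm_affine: "smooth_fun f \<Longrightarrow> smooth_fun (\<lambda>x. f (a * x + b))"
  by (simp add: smooth_Cn Cn_affine)
lemma sm_sub: "smooth_fun f \<Longrightarrow> smooth_fun g \<Longrightarrow> smooth_fun (\<lambda>x. f x - g x)"
proof -
  assume "smooth_fun f" "smooth_fun g"
  then have "smooth_fun (\<lambda>x. f x + (-1) * g x)" by (intro sm_add sm_mult sm_const)
  then show ?thesis by simp
qed
lemma sm_power: "smooth_fun f \<Longrightarrow> smooth_fun (\<lambda>x. f x ^ k)"
proof (induction k)
  case 0 then show ?case by (simp add: sm_const)
next
  case (Suc k)
  then have "smooth_fun (\<lambda>x. f x * f x ^ k)" by (intro sm_mult) auto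
  then show ?case by simp
qed
lemma sm_diff: "smooth_fun g \<Longrightarrow> g differentiable at x"
  unfolding smooth_Cn using Cn_diff by blast
lemma sm_D: "smooth_fun g \<Longrightarrow> DERIV g x :> deriv g x"
  using sm_diff DERIV_d by blast
lemma sm_deriv: "smooth_fun g \<Longrightarrow> smooth_fun (deriv g)"
  unfolding smooth_Cn using Cn_Suc by blast
lemma sm_cont: "smooth_fun g \<Longrightarrow> isCont g x"
  using sm_D DERIV_isCont by blast

lemma Pp_smooth: "smooth_fun Pp"
proof -
  have "smooth_fun (\<lambda>z. 6*z^5 - 15*z^4 + 10*z^3)"
    by (intro sm_add sm_sub sm_mult sm_const sm_power sm_id)
  then show ?thesis unfolding Pp_def[abs_def] .
qed

lemma deriv_const_on:
  assumes "open S" "z \<in> S" "\<And>y. y \<in> S \<Longrightarrow> g y = c"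
  shows "deriv g z = 0"
proof -
  have "DERIV (\<lambda>_. c) z :> 0" by simp
  then have "DERIV g z :> 0"
    by (rule has_field_derivative_transform_within_open[OF _ assms(1,2)]) (use assms(3) in auto)
  then show ?thesis by (rule DERIV_imp_deriv)
qed

lemma deriv2_const_on:
  assumes "open S" "z \<in> S" "\<And>y. y \<in> S \<Longrightarrow> g y = c"
  shows "deriv (deriv g) z = 0"
  by (rule deriv_const_on[OF assms(1,2), of _ 0]) (rule deriv_const_on[OF assms(1) _ assms(3)])

lemma bounded_outside:
  fixes u :: "real \<Rightarrow> real"
  assumes "\<And>x. isCont u x" "\<And>z. z < 0 \<or> z > 1 \<Longrightarrow> u z = 0"
  shows "\<exists>M\<ge>0. \<forall>z. \<bar>u z\<bar> \<le> M"
proof -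
  have "continuous_on {0..1} u" using assms(1) by (simp add: continuous_at_imp_continuous_on)
  then have "compact (u ` {0..1})" by (rule compact_continuous_image) simp
  then have "bounded (u ` {0..1})" by (rule compact_imp_bounded)
  then obtain M where M: "\<forall>y\<in>u ` {0..1}. \<bar>y\<bar> \<le> M" by (auto simp: bounded_real)
  have "\<bar>u z\<bar> \<le> max M 0" for z
  proof (cases "z < 0 \<or> z > 1")
    case True then show ?thesis using assms(2) by simp
  next
    case False then have "z \<in> {0..1}" by auto
    then show ?thesis using M by force
  qed
  then show ?thesis by (intro exI[of _ "max M 0"]) auto
qed

definition bet :: "real \<Rightarrow> real" where "bet x = hh x * inverse (hh x + hh (1 - x))"

lemma bet_smooth: "smooth_fun bet"
proof -
  have h1: "smooth_fun (\<lambda>x. hh ((-1) * x + 1))" by (intro sm_affine hh_smooth)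
  have "smooth_fun (\<lambda>x. hh x + hh ((-1) * x + 1))" by (intro sm_add hh_smooth h1)
  moreover have "hh x + hh ((-1) * x + 1) \<noteq> 0" for x
    using hh_pos[of x] hh_pos[of "1 - x"] hh_nonneg[of x] hh_nonneg[of "1-x"] by (cases "x > 0") auto
  ultimately have "smooth_fun (\<lambda>x. inverse (hh x + hh ((-1) * x + 1)))" by (rule smooth_inverse)
  then have A: "smooth_fun (\<lambda>x. hh x * inverse (hh x + hh ((-1) * x + 1)))" by (intro sm_mult hh_smooth)
  have eq: "(\<lambda>x. hh x * inverse (hh x + hh ((-1) * x + 1))) = bet"
    by (rule ext) (simp add: bet_def)
  from A show ?thesis unfolding eq .
qed

lemma bet_0: "x \<le> 0 \<Longrightarrow> bet x = 0"
  by (simp add: bet_def hh_zero)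
lemma bet_1: "x \<ge> 1 \<Longrightarrow> bet x = 1"
  using hh_pos[of x] by (simp add: bet_def hh_zero)
lemma bet_range: "0 \<le> bet x \<and> bet x \<le> 1"
proof -
  have "0 < hh x + hh (1 - x)"
    using hh_pos[of x] hh_pos[of "1 - x"] hh_nonneg[of x] hh_nonneg[of "1-x"] by (cases "x > 0") auto
  then show ?thesis using hh_nonneg[of x] hh_nonneg[of "1-x"]
    by (auto simp: bet_def field_simps)
qed

lemma bet_d0: "x < 0 \<Longrightarrow> deriv bet x = 0" and bet_d1: "x > 1 \<Longrightarrow> deriv bet x = 0"
  and bet_dd0: "x < 0 \<Longrightarrow> deriv (deriv bet) x = 0" and bet_dd1: "x > 1 \<Longrightarrow> deriv (deriv bet) x = 0"
proof -
  show "x < 0 \<Longrightarrow> deriv bet x = 0"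
    by (rule deriv_const_on[of "{..<0}" _ _ 0]) (auto simp: bet_0)
  show "x > 1 \<Longrightarrow> deriv bet x = 0"
    by (rule deriv_const_on[of "{1<..}" _ _ 1]) (auto simp: bet_1)
  show "x < 0 \<Longrightarrow> deriv (deriv bet) x = 0"
    by (rule deriv2_const_on[of "{..<0}" _ _ 0]) (auto simp: bet_0)
  show "x > 1 \<Longrightarrow> deriv (deriv bet) x = 0"
    by (rule deriv2_const_on[of "{1<..}" _ _ 1]) (auto simp: bet_1)
qed

lemma bet_bounds: "\<exists>M1\<ge>0. \<forall>z. \<bar>deriv bet z\<bar> \<le> M1" "\<exists>M2\<ge>0. \<forall>z. \<bar>deriv (deriv bet) z\<bar> \<le> M2"
proof -
  have s1: "smooth_fun (deriv bet)" by (rule sm_deriv[OF bet_smooth])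
  have s2: "smooth_fun (deriv (deriv bet))" by (rule sm_deriv[OF s1])
  show "\<exists>M1\<ge>0. \<forall>z. \<bar>deriv bet z\<bar> \<le> M1"
    by (rule bounded_outside) (use sm_cont[OF s1] bet_d0 bet_d1 in auto)
  show "\<exists>M2\<ge>0. \<forall>z. \<bar>deriv (deriv bet) z\<bar> \<le> M2"
    by (rule bounded_outside) (use sm_cont[OF s2] bet_dd0 bet_dd1 in auto)
qed



lemma deriv2_eq_open:
  assumes "open S" "x \<in> S" "\<And>y. y \<in> S \<Longrightarrow> f y = g y"
  shows "deriv (deriv f) x = deriv (deriv g) x"
proof -
  have ev: "eventually (\<lambda>y. f y = g y) (nhds x)"
    using assms by (auto simp: eventually_nhds)
  have "(deriv ^^ 2) f x = (deriv ^^ 2) g x"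
    by (rule higher_deriv_cong_ev[OF ev refl])
  then show ?thesis by (simp add: numeral_2_eq_2)
qed

lemma deriv_eq_open:
  assumes "open S" "x \<in> S" "\<And>y. y \<in> S \<Longrightarrow> f y = g y"
  shows "deriv f x = deriv g x"
proof -
  have ev: "eventually (\<lambda>y. f y = g y) (nhds x)"
    using assms by (auto simp: eventually_nhds)
  show ?thesis by (rule deriv_cong_ev[OF ev refl])
qed

lemma step_exists:
  "\<exists>T. smooth_fun T \<and> (\<forall>z\<le>0. T z = 0) \<and> (\<forall>z\<ge>1. T z = 1) \<and> (\<forall>z. 0 \<le> T z \<and> T z \<le> 1)
     \<and> (\<exists>M. \<forall>z. \<bar>deriv T z\<bar> \<le> M) \<and> (\<forall>z. \<bar>deriv (deriv T) z\<bar> \<le> 15/2)"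
proof -
  obtain M1 where M1: "M1 \<ge> 0" "\<And>z. \<bar>deriv bet z\<bar> \<le> M1" using bet_bounds(1) by blast
  obtain M2 where M2: "M2 \<ge> 0" "\<And>z. \<bar>deriv (deriv bet) z\<bar> \<le> M2" using bet_bounds(2) by blast
  define K where "K = 10*M2 + 60*M1 + 60"
  have K: "K \<ge> 60" using M1 M2 by (simp add: K_def)
  define d where "d = min (1/4) (1/K)"
  have d0: "0 < d" and d14: "d \<le> 1/4" and dK: "K * d \<le> 1"
    using K by (auto simp: d_def min_def field_simps)
  define U where "U z = bet (z/d) * Pp z" for z
  define U1 where "U1 z = deriv bet (z/d) / d * Pp z + bet (z/d) * Pp1 z" for z
  define U2 where "U2 z = deriv (deriv bet) (z/d) / d / d * Pp z + 2 * (deriv bet (z/d) / d * Pp1 z) + bet (z/d) * Pp2 z" for z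
  have sb: "smooth_fun bet" "smooth_fun (deriv bet)" "smooth_fun (deriv (deriv bet))"
    using bet_smooth sm_deriv by blast+
  have Dq: "DERIV (\<lambda>z. h (z/d)) z :> deriv h (z/d) / d" if "smooth_fun h" for h z
  proof -
    have "DERIV (\<lambda>z. z/d) z :> 1/d" using d0 by (auto intro!: derivative_eq_intros)
    from DERIV_chain2[OF sm_D[OF that] this] show ?thesis using d0 by simp
  qed
  have DU: "DERIV U z :> U1 z" for z
  proof -
    have "DERIV (\<lambda>z. bet (z/d) * Pp z) z :> deriv bet (z/d) / d * Pp z + Pp1 z * bet (z/d)"
      by (rule DERIV_mult[OF Dq[OF sb(1)] Pp_D])
    then show ?thesis unfolding U_def[abs_def] U1_def by (simp add: mult.commute)
  qed
  have DU1: "DERIV U1 z :> U2 z" for z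
  proof -
    have a: "DERIV (\<lambda>z. deriv bet (z/d) / d * Pp z) z :> deriv (deriv bet) (z/d) / d / d * Pp z + Pp1 z * (deriv bet (z/d) / d)"
      using DERIV_mult[OF DERIV_cdivide[OF Dq[OF sb(2)], of d] Pp_D] by simp
    have b: "DERIV (\<lambda>z. bet (z/d) * Pp1 z) z :> deriv bet (z/d) / d * Pp1 z + Pp2 z * bet (z/d)"
      by (rule DERIV_mult[OF Dq[OF sb(1)] Pp1_D])
    from DERIV_add[OF a b] show ?thesis unfolding U1_def[abs_def] U2_def
      by (simp add: algebra_simps)
  qed
  have dU: "deriv U = U1" by (rule deriv_eqI[OF DU])
  have dU1: "deriv U1 = U2" by (rule deriv_eqI[OF DU1])
  have U_sm: "smooth_fun U"
  proof -
    have "smooth_fun (\<lambda>z. bet ((1/d) * z + 0) * Pp z)" by (rule sm_mult[OF sm_affine[OF bet_smooth] Pp_smooth])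
    then show ?thesis unfolding U_def[abs_def] by simp
  qed
  have U2b: "\<bar>U2 z\<bar> \<le> 15/2" if "z < 1" for z
  proof (cases "z < 0")
    case True
    then have "z/d < 0" using d0 by (simp add: divide_neg_pos)
    then have "bet (z/d) = 0" "deriv bet (z/d) = 0" "deriv (deriv bet) (z/d) = 0"
      using bet_0[of "z/d"] bet_d0[of "z/d"] bet_dd0[of "z/d"] by auto
    then show ?thesis by (simp add: U2_def)
  next
    case False
    show ?thesis
    proof (cases "z \<le> d")
      case True
      have z0: "0 \<le> z" using False by simp
      have z1: "z \<le> 1" using True d14 by simp
      note P = Pp_bounds[OF z0 z1]
      have zd3: "z^3 \<le> d^3" and zd2: "z^2 \<le> d^2" using z0 True by (auto intro: power_mono)
      have t1: "\<bar>deriv (deriv bet) (z/d) / d / d * Pp z\<bar> \<le> M2 * (10 * d)"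
      proof -
        have "\<bar>deriv (deriv bet) (z/d) / d / d * Pp z\<bar> = \<bar>deriv (deriv bet) (z/d)\<bar> * (Pp z / (d*d))"
          using d0 P(1) by (simp add: abs_mult field_simps)
        also have "\<dots> \<le> M2 * (10 * d)"
        proof (rule mult_mono)
          have "Pp z / (d*d) \<le> 10 * z^3 / (d*d)" using P(2) d0 by (simp add: divide_right_mono)
          also have "\<dots> \<le> 10 * d^3 / (d*d)" using zd3 d0 by (simp add: divide_right_mono)
          also have "\<dots> = 10 * d" using d0 by (simp add: power3_eq_cube)
          finally show "Pp z / (d*d) \<le> 10 * d" .
        qed (use M2 P(1) d0 in auto)
        finally show ?thesis .
      qed
      have t2: "\<bar>2 * (deriv bet (z/d) / d * Pp1 z)\<bar> \<le> 2 * (M1 * (30 * d))"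
      proof -
        have "\<bar>2 * (deriv bet (z/d) / d * Pp1 z)\<bar> = 2 * (\<bar>deriv bet (z/d)\<bar> * (Pp1 z / d))"
          using d0 P(3) by (simp add: abs_mult field_simps)
        also have "\<dots> \<le> 2 * (M1 * (30 * d))"
        proof (intro mult_left_mono mult_mono)
          have "Pp1 z / d \<le> 30 * z^2 / d" using P(4) d0 by (simp add: divide_right_mono)
          also have "\<dots> \<le> 30 * d^2 / d" using zd2 d0 by (simp add: divide_right_mono)
          also have "\<dots> = 30 * d" using d0 by (simp add: power2_eq_square)
          finally show "Pp1 z / d \<le> 30 * d" .
        qed (use M1 P(3) d0 in auto)
        finally show ?thesis .
      qed
      have t3: "\<bar>bet (z/d) * Pp2 z\<bar> \<le> 60 * d"
      proof -
        have "\<bar>bet (z/d) * Pp2 z\<bar> = \<bar>bet (z/d)\<bar> * \<bar>Pp2 z\<bar>" by (simp add: abs_mult)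
        also have "\<dots> \<le> 1 * (60 * d)"
          using bet_range[of "z/d"] P(5) True by (intro mult_mono) auto
        finally show ?thesis by simp
      qed
      have "\<bar>U2 z\<bar> \<le> M2 * (10 * d) + 2 * (M1 * (30 * d)) + 60 * d"
        unfolding U2_def using t1 t2 t3 by linarith
      also have "\<dots> = K * d" by (simp add: K_def algebra_simps)
      also have "\<dots> \<le> 15/2" using dK by simp
      finally show ?thesis .
    next
      case False
      then have "z/d > 1" using d0 by (simp add: field_simps)
      then have "bet (z/d) = 1" "deriv bet (z/d) = 0" "deriv (deriv bet) (z/d) = 0"
        using bet_1[of "z/d"] bet_d1[of "z/d"] bet_dd1[of "z/d"] by auto
      moreover have "\<bar>Pp2 z\<bar> \<le> 15/2" using Pp_bounds(6)[of z] \<open>\<not> z < 0\<close> \<open>z < 1\<close> by simp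
      ultimately show ?thesis by (simp add: U2_def)
    qed
  qed
  define T where "T x = bet (x/d) * bet ((1-x)/d) * Pp x + 1 - bet ((1-x)/d)" for x
  have T_sm: "smooth_fun T"
  proof -
    have s1: "smooth_fun (\<lambda>x. bet ((1/d)*x + 0))" by (rule sm_affine[OF bet_smooth])
    have s2: "smooth_fun (\<lambda>x. bet ((-1/d)*x + 1/d))" by (rule sm_affine[OF bet_smooth])
    have "smooth_fun (\<lambda>x. bet ((1/d)*x+0) * bet ((-1/d)*x+1/d))" by (rule sm_mult[OF s1 s2])
    then have "smooth_fun (\<lambda>x. bet ((1/d)*x+0) * bet ((-1/d)*x+1/d) * Pp x)" by (rule sm_mult[OF _ Pp_smooth])
    then have "smooth_fun (\<lambda>x. bet ((1/d)*x+0) * bet ((-1/d)*x+1/d) * Pp x + 1)" by (rule sm_add[OF _ sm_const])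
    then have "smooth_fun (\<lambda>x. bet ((1/d) * x + 0) * bet ((-1/d) * x + 1/d) * Pp x + 1 - bet ((-1/d) * x + 1/d))"
      by (rule sm_sub[OF _ s2])
    moreover have "(\<lambda>x. bet ((1/d) * x + 0) * bet ((-1/d) * x + 1/d) * Pp x + 1 - bet ((-1/d) * x + 1/d)) = T"
      by (rule ext) (simp add: T_def diff_divide_distrib)
    ultimately show ?thesis by simp
  qed
  have TU: "T x = U x" if "x < 1 - d" for x
  proof -
    have "(1-x)/d > 1" using that d0 by (simp add: field_simps)
    then show ?thesis using bet_1[of "(1-x)/d"] by (simp add: T_def U_def)
  qed
  have TU': "T x = 1 - U (1 - x)" if "x > d" for x
  proof -
    have "x/d > 1" using that d0 by (simp add: field_simps)
    then have "bet (x/d) = 1" using bet_1[of "x/d"] by simp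
    then show ?thesis by (simp add: T_def U_def Pp_sym algebra_simps)
  qed
  have T0: "T z = 0" if "z \<le> 0" for z
  proof -
    have "(1-z)/d \<ge> 1" using that d0 d14 by (simp add: field_simps)
    moreover have "z/d \<le> 0" using that d0 by (simp add: divide_nonpos_pos)
    ultimately show ?thesis using bet_1[of "(1-z)/d"] bet_0[of "z/d"] by (simp add: T_def)
  qed
  have T1: "T z = 1" if "z \<ge> 1" for z
  proof -
    have "(1-z)/d \<le> 0" using that d0 by (simp add: divide_nonpos_pos)
    then show ?thesis using bet_0[of "(1-z)/d"] by (simp add: T_def)
  qed
  have Tr: "0 \<le> T z \<and> T z \<le> 1" for z
  proof (cases "z \<le> 0 \<or> z \<ge> 1")
    case True then show ?thesis using T0 T1 by auto
  next
    case False
    then have "0 \<le> Pp z" "Pp z \<le> 1" using Pp_bounds(1) Pp_le1 by auto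
    moreover note bet_range[of "z/d"] bet_range[of "(1-z)/d"]
    ultimately have r: "0 \<le> Pp z" "Pp z \<le> 1" "0 \<le> bet (z/d)" "bet (z/d) \<le> 1" "0 \<le> bet ((1-z)/d)" "bet ((1-z)/d) \<le> 1"
      by auto
    have bp: "bet (z/d) * Pp z \<le> 1" by (rule mult_le_one) (use r in auto)
    have "bet ((1-z)/d) * (bet (z/d) * Pp z) \<le> bet ((1-z)/d) * 1"
      by (rule mult_left_mono[OF bp]) (use r in auto)
    then have "0 \<le> bet (z/d) * bet ((1-z)/d) * Pp z" "bet (z/d) * bet ((1-z)/d) * Pp z \<le> bet ((1-z)/d)"
      using r by (simp_all add: mult_ac)
    then show ?thesis using bet_range[of "(1-z)/d"] by (simp add: T_def)
  qed
  have Tdb: "\<exists>M. \<forall>z. \<bar>deriv T z\<bar> \<le> M"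
  proof -
    have "\<exists>M\<ge>0. \<forall>z. \<bar>deriv T z\<bar> \<le> M"
    proof (rule bounded_outside)
      show "isCont (deriv T) x" for x by (rule sm_cont[OF sm_deriv[OF T_sm]])
      show "deriv T z = 0" if "z < 0 \<or> z > 1" for z
        using that
      proof
        assume "z < 0" then show ?thesis
          by (intro deriv_const_on[of "{..<0}" z T 0]) (auto simp: T0)
      next
        assume "z > 1" then show ?thesis
          by (intro deriv_const_on[of "{1<..}" z T 1]) (auto simp: T1)
      qed
    qed
    then show ?thesis by blast
  qed
  have Tdd: "\<bar>deriv (deriv T) x\<bar> \<le> 15/2" for x
  proof (cases "x < 1 - d")
    case True
    have "deriv (deriv T) x = deriv (deriv U) x"
      by (rule deriv2_eq_open[of "{..<1-d}"]) (use True TU in auto)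
    also have "\<dots> = U2 x" by (simp add: dU dU1)
    finally show ?thesis using U2b[of x] True d0 by simp
  next
    case False
    then have xd: "x > d" using d14 by simp
    have "deriv (deriv T) x = deriv (deriv (\<lambda>x. 1 - U (1 - x))) x"
      by (rule deriv2_eq_open[of "{d<..}"]) (use xd TU' in auto)
    also have "deriv (\<lambda>x. 1 - U (1 - x)) = (\<lambda>x. U1 (1 - x))"
    proof (rule deriv_eqI)
      fix x :: real
      have "DERIV (\<lambda>x. 1 - x) x :> -1" by (auto intro!: derivative_eq_intros)
      from DERIV_chain2[OF DU[of "1 - x"] this] have "DERIV (\<lambda>x. U (1 - x)) x :> U1 (1 - x) * -1" .
      then have "DERIV (\<lambda>x. 1 - U (1 - x)) x :> 0 - U1 (1 - x) * -1"
        by (intro DERIV_diff) auto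
      then show "DERIV (\<lambda>x. 1 - U (1 - x)) x :> U1 (1 - x)" by simp
    qed
    also have "deriv (\<lambda>x. U1 (1 - x)) x = - U2 (1 - x)"
    proof (rule DERIV_imp_deriv)
      have "DERIV (\<lambda>x. 1 - x) x :> -1" by (auto intro!: derivative_eq_intros)
      from DERIV_chain2[OF DU1[of "1 - x"] this] show "DERIV (\<lambda>x. U1 (1 - x)) x :> - U2 (1 - x)" by simp
    qed
    finally show ?thesis using U2b[of "1 - x"] d0 xd by simp
  qed
  show ?thesis
    by (rule exI[of _ T]) (use T_sm T0 T1 Tr Tdb Tdd in auto)
qed



lemma enc_range: "0 < enc c \<and> enc c \<le> 1"
proof -
  have "(1::real) \<le> 2 ^ fst c" "(1::real) \<le> 3 ^ tape_r (snd c)" "(1::real) \<le> 5 ^ tape_s (snd c)"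
    by simp_all
  have m: "(1::real) \<le> x * y" if "1 \<le> x" "1 \<le> y" for x y
    using mult_mono[of 1 x 1 y] that by simp
  have "(1::real) \<le> 2 ^ fst c * 3 ^ tape_r (snd c) * 5 ^ tape_s (snd c)"
    by (intro m) simp_all
  then show ?thesis by (simp add: enc_def)
qed

lemma smooth_local:
  assumes "\<And>y. \<exists>S g. open S \<and> y \<in> S \<and> smooth_fun g \<and> (\<forall>z\<in>S. f z = g z)"
  shows "smooth_fun f"
  unfolding smooth_fun_def
proof (intro allI)
  fix n and y :: real
  obtain S g where S: "open S" "y \<in> S" "smooth_fun g" "\<forall>z\<in>S. f z = g z" using assms by blast
  have eq: "(deriv ^^ n) f z = (deriv ^^ n) g z" if "z \<in> S" for z
  proof -
    have "eventually (\<lambda>w. f w = g w) (nhds z)"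
      using S that by (auto simp: eventually_nhds)
    then show ?thesis by (rule higher_deriv_cong_ev) simp
  qed
  have "(deriv ^^ n) g differentiable at y" using S(3) by (simp add: smooth_fun_def)
  then have "DERIV ((deriv ^^ n) g) y :> deriv ((deriv ^^ n) g) y" by (rule DERIV_d)
  then have "DERIV ((deriv ^^ n) f) y :> deriv ((deriv ^^ n) g) y"
    by (rule has_field_derivative_transform_within_open[OF _ S(1) S(2)]) (use eq in auto)
  then show "(deriv ^^ n) f differentiable at y" by (auto simp: real_differentiable_def)
qed

lemma DERIV_aff: "smooth_fun T \<Longrightarrow> DERIV (\<lambda>y. T (a * y + c)) y :> deriv T (a * y + c) * a"
proof -
  assume T: "smooth_fun T"
  have "DERIV (\<lambda>y. a * y + c) y :> a" by (auto intro!: derivative_eq_intros)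
  from DERIV_chain2[OF sm_D[OF T] this] show ?thesis .
qed

theorem mainTheorem4:
  fixes m :: nat and \<delta> :: "nat \<Rightarrow> nat \<Rightarrow> nat \<times> nat \<times> int" and q0 qh :: nat
  assumes "tm_wf m \<delta> q0 qh"
  shows "\<exists>\<epsilon>0>0. \<forall>\<epsilon>::real. 0 < \<epsilon> \<and> \<epsilon> < \<epsilon>0 \<longrightarrow>
    (\<forall>i::nat. \<exists>\<gamma> :: real \<Rightarrow> real \<times> real.
       proper_embedded_curve \<gamma> {p. 2 * real i \<le> fst p \<and> fst p \<le> 2 * real i + 1} \<and>
       (\<exists>c>0. \<forall>t. unit_tangent_y \<gamma> t \<ge> c) \<and>
       (\<forall>l::nat. (orbit_enc \<delta> qh q0 i l + 2 * real i, real l) \<in> range \<gamma>) \<and>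
       (\<forall>t. \<bar>curvature \<gamma> t\<bar> < 15) \<and>
       (\<forall>l::nat. {(orbit_enc \<delta> qh q0 i l + 2 * real i, y) | y. real l - \<epsilon> < y \<and> y < real l + \<epsilon>}
                   \<subseteq> range \<gamma>))"
proof -
  obtain T where Tsm: "smooth_fun T" and T0: "\<And>z. z \<le> 0 \<Longrightarrow> T z = 0"
    and T1: "\<And>z. z \<ge> 1 \<Longrightarrow> T z = 1" and Tr: "\<And>z. 0 \<le> T z \<and> T z \<le> 1"
    and TdM: "\<exists>M. \<forall>z. \<bar>deriv T z\<bar> \<le> M" and Tdd: "\<And>z. \<bar>deriv (deriv T) z\<bar> \<le> 15/2"
    using step_exists by blast
  obtain MT where MT: "\<And>z. \<bar>deriv T z\<bar> \<le> MT" using TdM by blast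
  have MT0: "MT \<ge> 0" using MT[of 0] by simp
  have Td1: "deriv T z = 0" if "z > 1" for z
    by (rule deriv_const_on[of "{1<..}" z T 1]) (use that T1 in auto)
  have Tdd1: "deriv (deriv T) z = 0" if "z > 1" for z
    by (rule deriv2_const_on[of "{1<..}" z T 1]) (use that T1 in auto)
  have main: "\<exists>\<gamma> :: real \<Rightarrow> real \<times> real.
       proper_embedded_curve \<gamma> {p. 2 * real i \<le> fst p \<and> fst p \<le> 2 * real i + 1} \<and>
       (\<exists>c>0. \<forall>t. unit_tangent_y \<gamma> t \<ge> c) \<and>
       (\<forall>l::nat. (orbit_enc \<delta> qh q0 i l + 2 * real i, real l) \<in> range \<gamma>) \<and>
       (\<forall>t. \<bar>curvature \<gamma> t\<bar> < 15) \<and>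
       (\<forall>l::nat. {(orbit_enc \<delta> qh q0 i l + 2 * real i, y) | y. real l - e < y \<and> y < real l + e}
                   \<subseteq> range \<gamma>)"
    if e0: "0 < e" and e1: "e < 1/20" for e :: real and i :: nat
  proof -
    define X where "X k = orbit_enc \<delta> qh q0 i (nat k)" for k :: int
    define D where "D k = X (k + 1) - X k" for k :: int
    define a where "a = 1 / (1 - 2*e)"
    define b where "b k = - (of_int k + e) * a" for k :: int
    define f where "f y = X \<lfloor>y\<rfloor> + D \<lfloor>y\<rfloor> * T (a * y + b \<lfloor>y\<rfloor>)" for y :: real
    define g where "g k y = X k + D k * T (a * y + b k) + D (k - 1) * (T (a * y + b (k - 1)) - 1)" for k :: int and y :: real
    have a1: "a * (1 - 2*e) = 1" and apos: "a > 0" and a2: "a \<le> 10/9"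
      using e0 e1 by (auto simp: a_def field_simps)
    have ab: "a * y + b k = (y - of_int k - e) * a" for y k by (simp add: b_def algebra_simps)
    have Xr: "0 < X k \<and> X k \<le> 1" for k by (simp add: X_def orbit_enc_def enc_range)
    have Db: "\<bar>D k\<bar> \<le> 1" for k using Xr[of k] Xr[of "k+1"] by (simp add: D_def abs_le_iff)
    have XD: "X (k - 1) + D (k - 1) = X k" for k by (simp add: D_def)
    have big: "a * y + b (k - 1) > 1" if "of_int k \<le> y" for y k
    proof -
      have "(y - of_int (k - 1) - e) * a \<ge> (1 - e) * a" using that apos by (intro mult_right_mono) auto
      moreover have "(1 - e) * a > (1 - 2*e) * a" using e0 apos by (intro mult_strict_right_mono) auto
      ultimately show ?thesis using a1 ab[of y "k-1"] by (simp add: mult.commute)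
    qed
    have small: "a * y + b k < 0" if "y < of_int k + e" for y k
    proof -
      have "(y - of_int k - e) * a < 0" using that apos by (intro mult_neg_pos) auto
      then show ?thesis using ab by simp
    qed
    have fg: "f z = g k z" if "of_int k - 1 < z" "z < of_int k + 1" for k z
    proof (cases "of_int k \<le> z")
      case True
      then have fz: "\<lfloor>z\<rfloor> = k" using that by (simp add: floor_eq_iff)
      have t1: "T (a * z + b (k - 1)) = 1" using T1 big[OF True] by simp
      show ?thesis unfolding f_def g_def fz t1 by simp
    next
      case False
      then have fz: "\<lfloor>z\<rfloor> = k - 1" using that by (simp add: floor_eq_iff)
      have t0: "T (a * z + b k) = 0" using T0 small[of z k] False e0 by simp
      have "g k z = X k + D (k - 1) * T (a * z + b (k - 1)) - D (k - 1)"
        unfolding g_def t0 by (simp add: right_diff_distrib)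
      also have "\<dots> = X (k - 1) + D (k - 1) * T (a * z + b (k - 1))"
        using XD[of k] by linarith
      also have "\<dots> = f z" unfolding f_def fz by simp
      finally show ?thesis by simp
    qed
    have gsm: "smooth_fun (g k)" for k
    proof -
      have s1: "smooth_fun (\<lambda>y. T (a * y + b k))" by (rule sm_affine[OF Tsm])
      have s2: "smooth_fun (\<lambda>y. T (a * y + b (k - 1)))" by (rule sm_affine[OF Tsm])
      have "smooth_fun (\<lambda>y. D k * T (a * y + b k))" by (rule sm_mult[OF sm_const s1])
      then have "smooth_fun (\<lambda>y. X k + D k * T (a * y + b k))" by (rule sm_add[OF sm_const])
      moreover have "smooth_fun (\<lambda>y. D (k - 1) * (T (a * y + b (k - 1)) - 1))"
        by (rule sm_mult[OF sm_const sm_sub[OF s2 sm_const]])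
      ultimately have "smooth_fun (\<lambda>y. X k + D k * T (a * y + b k) + D (k - 1) * (T (a * y + b (k - 1)) - 1))"
        by (rule sm_add)
      then show ?thesis unfolding g_def by simp
    qed
    have nbhd: "open {of_int k - 1 <..< of_int k + (1::real)}" "y \<in> {of_int \<lfloor>y\<rfloor> - 1 <..< of_int \<lfloor>y\<rfloor> + 1}" for k y
      by auto (linarith+)
    have fsm: "smooth_fun f"
    proof (rule smooth_local)
      fix y
      show "\<exists>S g. open S \<and> y \<in> S \<and> smooth_fun g \<and> (\<forall>z\<in>S. f z = g z)"
        by (rule exI[of _ "{of_int \<lfloor>y\<rfloor> - 1 <..< of_int \<lfloor>y\<rfloor> + 1}"], rule exI[of _ "g \<lfloor>y\<rfloor>"])
           (use nbhd gsm fg in auto)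
    qed
    have dg: "deriv (g k) = (\<lambda>y. D k * (deriv T (a * y + b k) * a) + D (k - 1) * (deriv T (a * y + b (k - 1)) * a))" for k
    proof (rule deriv_eqI)
      fix y
      have "DERIV (\<lambda>y. X k + D k * T (a * y + b k) + D (k - 1) * (T (a * y + b (k - 1)) - 1)) y :>
          0 + D k * (deriv T (a * y + b k) * a) + D (k - 1) * (deriv T (a * y + b (k - 1)) * a - 0)"
        by (intro DERIV_add DERIV_cmult DERIV_diff DERIV_aff[OF Tsm] DERIV_const)
      then show "DERIV (g k) y :> D k * (deriv T (a * y + b k) * a) + D (k - 1) * (deriv T (a * y + b (k - 1)) * a)"
        unfolding g_def[abs_def] by simp
    qed
    have ddg: "deriv (deriv (g k)) = (\<lambda>y. D k * (deriv (deriv T) (a * y + b k) * a * a) + D (k - 1) * (deriv (deriv T) (a * y + b (k - 1)) * a * a))" for k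
    proof (rule deriv_eqI)
      fix y
      have "DERIV (\<lambda>y. D k * (deriv T (a * y + b k) * a) + D (k - 1) * (deriv T (a * y + b (k - 1)) * a)) y :>
          D k * (deriv (deriv T) (a * y + b k) * a * a) + D (k - 1) * (deriv (deriv T) (a * y + b (k - 1)) * a * a)"
        by (intro DERIV_add DERIV_cmult DERIV_cmult_right DERIV_aff[OF sm_deriv[OF Tsm]])
      then show "DERIV (deriv (g k)) y :> D k * (deriv (deriv T) (a * y + b k) * a * a) + D (k - 1) * (deriv (deriv T) (a * y + b (k - 1)) * a * a)"
        unfolding dg by simp
    qed
    have df: "deriv f y = D \<lfloor>y\<rfloor> * (deriv T (a * y + b \<lfloor>y\<rfloor>) * a)" for y
    proof -
      have "deriv f y = deriv (g \<lfloor>y\<rfloor>) y"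
        by (rule deriv_eq_open[OF nbhd(1) nbhd(2)]) (use fg in auto)
      moreover have "deriv T (a * y + b (\<lfloor>y\<rfloor> - 1)) = 0" by (rule Td1[OF big]) simp
      ultimately show ?thesis by (simp add: dg)
    qed
    have ddf: "deriv (deriv f) y = D \<lfloor>y\<rfloor> * (deriv (deriv T) (a * y + b \<lfloor>y\<rfloor>) * a * a)" for y
    proof -
      have "deriv (deriv f) y = deriv (deriv (g \<lfloor>y\<rfloor>)) y"
        by (rule deriv2_eq_open[OF nbhd(1) nbhd(2)]) (use fg in auto)
      moreover have "deriv (deriv T) (a * y + b (\<lfloor>y\<rfloor> - 1)) = 0" by (rule Tdd1[OF big]) simp
      ultimately show ?thesis by (simp add: ddg)
    qed
    have dfb: "\<bar>deriv f y\<bar> \<le> MT * a" for y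
    proof -
      have "\<bar>deriv f y\<bar> = \<bar>D \<lfloor>y\<rfloor>\<bar> * (\<bar>deriv T (a * y + b \<lfloor>y\<rfloor>)\<bar> * a)"
        using apos by (simp add: df abs_mult)
      also have "\<dots> \<le> 1 * (MT * a)"
        using Db MT apos MT0 by (intro mult_mono mult_right_mono) auto
      finally show ?thesis by simp
    qed
    have ddfb: "\<bar>deriv (deriv f) y\<bar> < 15" for y
    proof -
      have "\<bar>deriv (deriv f) y\<bar> = \<bar>D \<lfloor>y\<rfloor>\<bar> * (\<bar>deriv (deriv T) (a * y + b \<lfloor>y\<rfloor>)\<bar> * (a * a))"
        using apos by (simp add: ddf abs_mult mult.assoc)
      also have "\<dots> \<le> 1 * (15/2 * (10/9 * (10/9)))"
        using Db Tdd apos a2 by (intro mult_mono mult_right_mono) auto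
      finally show ?thesis by simp
    qed
    have fr: "0 \<le> f y \<and> f y \<le> 1" for y
    proof -
      have "f y = (1 - T (a * y + b \<lfloor>y\<rfloor>)) * X \<lfloor>y\<rfloor> + T (a * y + b \<lfloor>y\<rfloor>) * X (\<lfloor>y\<rfloor> + 1)"
        by (simp add: f_def D_def algebra_simps)
      moreover note Tr[of "a * y + b \<lfloor>y\<rfloor>"] Xr[of "\<lfloor>y\<rfloor>"] Xr[of "\<lfloor>y\<rfloor> + 1"]
      ultimately show ?thesis
        by (smt (verit) mult_left_le mult_nonneg_nonneg)
    qed
    have fl: "f y = X (int l)" if "real l - e < y" "y < real l + e" for l :: nat and y
    proof (cases "real l \<le> y")
      case True
      then have fy: "\<lfloor>y\<rfloor> = int l" using that e1 by (simp add: floor_eq_iff)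
      have t0: "T (a * y + b (int l)) = 0" using T0 small[of y "int l"] that by simp
      show ?thesis unfolding f_def fy t0 by simp
    next
      case False
      then have fl: "\<lfloor>y\<rfloor> = int l - 1" using that e1 by (simp add: floor_eq_iff)
      have "(y - of_int (int l - 1) - e) * a > (1 - 2*e) * a"
        using that apos by (intro mult_strict_right_mono) auto
      then have "a * y + b (int l - 1) > 1" using a1 ab[of y "int l - 1"] by (simp add: mult.commute)
      then have "T (a * y + b (int l - 1)) = 1" using T1 by simp
      then show ?thesis unfolding f_def fl using XD[of "int l"] by simp
    qed
    define \<gamma> where "\<gamma> t = (f t + 2 * real i, t)" for t
    have cx: "cx \<gamma> = (\<lambda>t. f t + 2 * real i)" by (rule ext) (simp add: cx_def \<gamma>_def)
    have cy: "cy \<gamma> = (\<lambda>t. t)" by (rule ext) (simp add: cy_def \<gamma>_def)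
    have dcx: "deriv (cx \<gamma>) = deriv f"
    proof (rule deriv_eqI)
      fix t
      have "DERIV (\<lambda>t. f t + 2 * real i) t :> deriv f t + 0"
        by (intro DERIV_add sm_D[OF fsm] DERIV_const)
      then show "DERIV (cx \<gamma>) t :> deriv f t" by (simp add: cx)
    qed
    have dcy: "deriv (cy \<gamma>) = (\<lambda>t. 1)" unfolding cy by (rule deriv_eqI) simp
    have ddcy: "deriv (deriv (cy \<gamma>)) = (\<lambda>t. 0)" unfolding dcy by (rule deriv_eqI) simp
    have fcont: "continuous_on UNIV f" using sm_cont[OF fsm] by (simp add: continuous_at_imp_continuous_on)
    have gcont: "continuous_on UNIV \<gamma>" unfolding \<gamma>_def[abs_def]
      by (intro continuous_intros continuous_on_add fcont)
    have pec: "proper_embedded_curve \<gamma> {p. 2 * real i \<le> fst p \<and> fst p \<le> 2 * real i + 1}"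
      unfolding proper_embedded_curve_def
    proof (intro conjI allI impI)
      show "smooth_fun (cx \<gamma>)" unfolding cx by (rule sm_add[OF fsm sm_const])
      show "smooth_fun (cy \<gamma>)" unfolding cy by (rule sm_id)
      show "(deriv (cx \<gamma>) t, deriv (cy \<gamma>) t) \<noteq> (0, 0)" for t by (simp add: dcy)
      show "inj \<gamma>" by (rule injI) (simp add: \<gamma>_def)
      show "\<exists>g. homeomorphism UNIV (range \<gamma>) \<gamma> g"
      proof (rule exI[of _ snd])
        have h1: "\<forall>x\<in>UNIV. snd (\<gamma> x) = x" by (simp add: \<gamma>_def)
        have h3: "\<forall>y\<in>range \<gamma>. \<gamma> (snd y) = y" by (auto simp: \<gamma>_def)
        have h4: "snd ` range \<gamma> = UNIV"
        proof -
          have "x \<in> snd ` range \<gamma>" for x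
          proof -
            have "x = snd (\<gamma> x)" by (simp add: \<gamma>_def)
            then show ?thesis by blast
          qed
          then show ?thesis by auto
        qed
        have h5: "continuous_on (range \<gamma>) snd" by (intro continuous_intros)
        show "homeomorphism UNIV (range \<gamma>) \<gamma> snd"
          unfolding homeomorphism_def using h1 h3 h4 h5 gcont by blast
      qed
      show "range \<gamma> \<subseteq> {p. 2 * real i \<le> fst p \<and> fst p \<le> 2 * real i + 1}"
        using fr by (auto simp: \<gamma>_def)
      fix K :: "(real \<times> real) set"
      assume K: "compact K"
      have "closed (\<gamma> -` K)"
        by (rule continuous_closed_vimage[OF compact_imp_closed[OF K]])
           (use gcont in \<open>simp add: continuous_on_eq_continuous_at\<close>)
      moreover have "bounded (\<gamma> -` K)"
      proof -
        obtain B where B: "\<forall>p\<in>K. norm p \<le> B" using compact_imp_bounded[OF K] by (auto simp: bounded_iff)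
        have "norm t \<le> B" if "t \<in> \<gamma> -` K" for t
        proof -
          have "norm t \<le> norm (\<gamma> t)" unfolding \<gamma>_def by (rule norm_snd_le)
          also have "\<dots> \<le> B" using B that by auto
          finally show ?thesis .
        qed
        then show ?thesis by (auto simp: bounded_iff)
      qed
      ultimately show "compact (\<gamma> -` K)" by (simp add: compact_eq_bounded_closed)
    qed
    have ut: "\<exists>c>0. \<forall>t. unit_tangent_y \<gamma> t \<ge> c"
    proof (rule exI[of _ "1 / sqrt ((MT * a)^2 + 1)"], intro conjI allI)
      have p: "0 < (MT * a)^2 + 1" using zero_le_power2[of "MT*a"] by linarith
      then show "0 < 1 / sqrt ((MT * a)^2 + 1)" by simp
      fix t
      have p': "0 < (deriv f t)^2 + 1" using zero_le_power2[of "deriv f t"] by linarith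
      have "(deriv f t)^2 \<le> (MT * a)^2"
        using dfb[of t] by (metis abs_le_square_iff abs_of_nonneg MT0 apos less_imp_le mult_nonneg_nonneg)
      then have "sqrt ((deriv f t)^2 + 1) \<le> sqrt ((MT * a)^2 + 1)" by simp
      then have "1 / sqrt ((MT * a)^2 + 1) \<le> 1 / sqrt ((deriv f t)^2 + 1)"
        by (intro divide_left_mono) (use p p' in auto)
      then show "1 / sqrt ((MT * a)^2 + 1) \<le> unit_tangent_y \<gamma> t"
        by (simp add: unit_tangent_y_def dcx dcy)
    qed
    have curv: "\<bar>curvature \<gamma> t\<bar> < 15" for t
    proof -
      have pw: "1 \<le> ((deriv f t)^2 + 1) powr (3/2)" by (rule ge_one_powr_ge_zero) auto
      have "curvature \<gamma> t = - deriv (deriv f) t / ((deriv f t)^2 + 1) powr (3/2)"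
        by (simp add: curvature_def dcx dcy ddcy)
      then have "\<bar>curvature \<gamma> t\<bar> = \<bar>deriv (deriv f) t\<bar> / ((deriv f t)^2 + 1) powr (3/2)"
        by simp
      also have "\<dots> \<le> \<bar>deriv (deriv f) t\<bar>" using pw by (simp add: divide_le_eq mult_le_cancel_left1 mult_le_cancel_left2)
      also have "\<dots> < 15" by (rule ddfb)
      finally show ?thesis .
    qed
    have seg: "{(orbit_enc \<delta> qh q0 i l + 2 * real i, y) | y. real l - e < y \<and> y < real l + e} \<subseteq> range \<gamma>" for l :: nat
    proof
      fix p assume "p \<in> {(orbit_enc \<delta> qh q0 i l + 2 * real i, y) | y. real l - e < y \<and> y < real l + e}"
      then obtain y where y: "p = (orbit_enc \<delta> qh q0 i l + 2 * real i, y)" "real l - e < y" "y < real l + e" by blast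
      then have "p = \<gamma> y" using fl[OF y(2,3)] by (simp add: \<gamma>_def X_def)
      then show "p \<in> range \<gamma>" by simp
    qed
    have pts: "(orbit_enc \<delta> qh q0 i l + 2 * real i, real l) \<in> range \<gamma>" for l :: nat
      using seg[of l] e0 by auto
    show ?thesis using pec ut pts curv seg by blast
  qed
  show ?thesis
    by (rule exI[of _ "1/20"]) (use main in auto)
qed

end
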